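(* $\mathtt{RealTime_{CA}}\subseteq\mathtt{pred}$-$\mathtt{ESO}$-$\mathtt{HORN}$: for every cellular automaton $\mathcal A$ with parallel input, neighborhood $\{-1,0,1\}$ and first cell as output cell, there is a predecessor Horn formula $\Phi$ such that for all $w\in\Sigma^+$, $\mathcal A$ accepts $w$ in real time if and only if $\langle w\rangle\models\Phi$.
   Context: Fix a finite alphabet $\Sigma$. A nonempty word $w=w_1\cdots w_n$ is represented by the structure $\langle w\rangle=([1,n];(Q_s)_{s\in\Sigma},\mathtt{min},\mathtt{max},\mathtt{suc},\mathtt{pred})$ with $Q_s(i)\iff w_i=s$, $\mathtt{min}(i)\iff i=1$, $\mathtt{max}(i)\iff i=n$, $\mathtt{suc}(i)=\min(i+1,n)$, $\mathtt{pred}(i)=\max(i-1,1)$; $x-k$ denotes $\mathtt{pred}^k(x)$. A predecessor Horn formula is $\Phi=\exists\mathbf{R}\forall x\forall y\,\psi(x,y)$, $\mathbf{R}$ a finite set of binary relation symbols, $\psi$ a conjunction of Horn clauses in $x,y$, each of the form $\delta_1\wedge\cdots\wedge\delta_r\to\delta_0$ with $\delta_0$ an atom $R(x,y)$ ($R\in\mathbf{R}$) or $\bot$, each hypothesis being one of: $Q_s(x-a)$, $Q_s(y-a)$ ($s\in\Sigma$, $a\ge0$); $U(x-a)$, $\neg U(x-a)$, $U(y-a)$, $\neg U(y-a)$ ($U\in\{\mathtt{min},\mathtt{max}\}$, $a\ge0$); $S(x-a,y-b)$ or $S(y-b,x-a)$ ($S\in\mathbf{R}$, $a,b\ge0$).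 $\mathtt{pred}$-$\mathtt{ESO}$-$\mathtt{HORN}$ is the class of languages $\{w\in\Sigma^+:\langle w\rangle\models\Phi\}$. A cellular automaton is $(Q,\Sigma,Q_{accept},\mathcal N,\delta)$ with finite $Q\supseteq\Sigma$, $Q_{accept}\subseteq Q$, finite ordered neighborhood $\mathcal N\subseteq\mathbb Z$, $\delta:Q^{|\mathcal N|}\to Q$. On input $w$ of length $n$ it uses cells $1,\dots,n$, cells outside being permanently in a state $\sharp$; with parallel input $\langle c,1\rangle=w_c$ and $\langle c,t\rangle=\delta(\langle c+v,t-1\rangle:v\in\mathcal N)$ for $t>1$. With $\mathcal N=\{-1,0,1\}$ and output cell $1$, $\mathcal A$ accepts $w$ in real time iff $\langle 1,n\rangle\in Q_{accept}$; $\mathtt{RealTime_{CA}}$ is the class of languages so accepted. *)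

theory Defs
  imports Main
begin

text \<open>The alphabet Sigma is a finite type 'a; the state set Q is a finite type 'q.
  Q contains Sigma via the injective embedding inp, and the border state sharp is
  not an input letter. The local rule acts on (left, self, right).\<close>

record ('a, 'q) ca =
  inp :: "'a \<Rightarrow> 'q"
  sharp :: "'q"
  accept :: "'q set"
  delta :: "'q \<Rightarrow> 'q \<Rightarrow> 'q \<Rightarrow> 'q"

definition ca_wf :: "('a, 'q) ca \<Rightarrow> bool" where
  "ca_wf A \<longleftrightarrow> inj (inp A) \<and> sharp A \<notin> range (inp A)"

text \<open>ca_state A w t c is the state of cell c at time t+1 (paper notation <c, t+1>).\<close>
fun ca_state :: "('a, 'q) ca \<Rightarrow> 'a list \<Rightarrow> nat \<Rightarrow> int \<Rightarrow> 'q" where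
  "ca_state A w 0 c =
     (if 1 \<le> c \<and> c \<le> int (length w) then inp A (w ! nat (c - 1)) else sharp A)"
| "ca_state A w (Suc t) c =
     (if 1 \<le> c \<and> c \<le> int (length w)
      then delta A (ca_state A w t (c - 1)) (ca_state A w t c) (ca_state A w t (c + 1))
      else sharp A)"

text \<open>Real-time acceptance: state of cell 1 at time n = |w| lies in Q_accept.\<close>
definition rt_accepts :: "('a, 'q) ca \<Rightarrow> 'a list \<Rightarrow> bool" where
  "rt_accepts A w \<longleftrightarrow> ca_state A w (length w - 1) 1 \<in> accept A"

datatype fvar = VX | VY

text \<open>Relation symbols are natural numbers.
  HQ v s a       : Q_s(v - a)
  HMin v a b     : min(v - a) if b, else \<not>min(v - a)
  HMax v a b     : max(v - a) if b, else \<not>max(v - a)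
  HRelXY S a b   : S(x - a, y - b)
  HRelYX S b a   : S(y - b, x - a)\<close>
datatype 'a hyp =
    HQ fvar 'a nat
  | HMin fvar nat bool
  | HMax fvar nat bool
  | HRelXY nat nat nat
  | HRelYX nat nat nat

datatype concl = CRel nat | CBot

type_synonym 'a clause = "'a hyp list \<times> concl"
type_synonym 'a horn_formula = "'a clause list"

text \<open>Structure <w>: domain [1,n]; pred^a(i) = max(i - a, 1).\<close>
definition predk :: "nat \<Rightarrow> nat \<Rightarrow> nat" where
  "predk a i = max (i - a) 1"

definition vval :: "fvar \<Rightarrow> nat \<Rightarrow> nat \<Rightarrow> nat" where
  "vval v x y = (case v of VX \<Rightarrow> x | VY \<Rightarrow> y)"

fun hyp_holds :: "'a list \<Rightarrow> (nat \<Rightarrow> nat \<Rightarrow> nat \<Rightarrow> bool) \<Rightarrow> nat \<Rightarrow> nat \<Rightarrow> 'a hyp \<Rightarrow> bool" where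
  "hyp_holds w I x y (HQ v s a) = (w ! (predk a (vval v x y) - 1) = s)"
| "hyp_holds w I x y (HMin v a b) = ((predk a (vval v x y) = 1) = b)"
| "hyp_holds w I x y (HMax v a b) = ((predk a (vval v x y) = length w) = b)"
| "hyp_holds w I x y (HRelXY S a b) = I S (predk a x) (predk b y)"
| "hyp_holds w I x y (HRelYX S b a) = I S (predk b y) (predk a x)"

fun concl_holds :: "(nat \<Rightarrow> nat \<Rightarrow> nat \<Rightarrow> bool) \<Rightarrow> nat \<Rightarrow> nat \<Rightarrow> concl \<Rightarrow> bool" where
  "concl_holds I x y (CRel R) = I R x y"
| "concl_holds I x y CBot = False"

text \<open><w> |= exists R forall x forall y psi(x,y); the relations I are binary relations
  over the domain (values outside [1,n] are never inspected).\<close>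
definition models :: "'a list \<Rightarrow> 'a horn_formula \<Rightarrow> bool" where
  "models w \<Phi> \<longleftrightarrow> (\<exists>I. \<forall>x y. 1 \<le> x \<and> x \<le> length w \<and> 1 \<le> y \<and> y \<le> length w \<longrightarrow>
      (\<forall>cl \<in> set \<Phi>. (\<forall>h \<in> set (fst cl). hyp_holds w I x y h) \<longrightarrow> concl_holds I x y (snd cl)))"

end

theory Submission
  imports Defs
begin

definition rid :: "('q \<Rightarrow> nat) \<Rightarrow> 'q \<Rightarrow> nat" where
  "rid f q = f q + 2"

definition phi :: "('q \<Rightarrow> nat) \<Rightarrow> 'q list \<Rightarrow> 'a list \<Rightarrow> ('a, 'q) ca \<Rightarrow> 'a horn_formula" where
  "phi f qs ss A =
     [([HMin VX 0 True, HMin VY 0 True], CRel 0),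
      ([HMin VX 0 False, HMin VY 0 False, HRelXY 0 1 1], CRel 0),
      ([HMin VX 0 False, HMin VY 0 True], CRel 1),
      ([HMin VY 0 False, HRelXY 1 1 1], CRel 1)]
     @ map (\<lambda>s. ([HMin VY 0 True, HQ VX s 0], CRel (rid f (inp A s)))) ss
     @ concat (map (\<lambda>a. map (\<lambda>b. ([HMin VY 0 False, HRelXY 0 0 0, HRelXY (rid f a) 1 1,
            HRelXY (rid f b) 0 1], CRel (rid f (delta A (sharp A) a b)))) qs) qs)
     @ concat (map (\<lambda>a. concat (map (\<lambda>b. map (\<lambda>c. ([HMin VY 0 False, HRelXY 1 0 0,
            HRelXY (rid f a) 2 1, HRelXY (rid f b) 1 1, HRelXY (rid f c) 0 1],
            CRel (rid f (delta A a b c)))) qs) qs)) qs)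
     @ map (\<lambda>q. ([HMax VX 0 True, HMax VY 0 True, HRelXY (rid f q) 0 0], CBot))
         (filter (\<lambda>q. q \<notin> accept A) qs)"

lemma mem2: "a \<in> set qs \<Longrightarrow> b \<in> set qs \<Longrightarrow>
  F a b \<in> set (concat (map (\<lambda>a. map (\<lambda>b. F a b) qs) qs))"
  by auto

lemma mem3: "a \<in> set qs \<Longrightarrow> b \<in> set qs \<Longrightarrow> c \<in> set qs \<Longrightarrow>
  F a b c \<in> set (concat (map (\<lambda>a. concat (map (\<lambda>b. map (\<lambda>c. F a b c) qs) qs)) qs))"
  by auto

lemma mem1: "q \<in> set qs \<Longrightarrow> P q \<Longrightarrow> F q \<in> set (map F (filter P qs))"
  by auto

lemma mem_c1: "([HMin VX 0 True, HMin VY 0 True], CRel 0) \<in> set (phi f qs ss A)"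
  unfolding phi_def set_append by (rule UnI1) simp

lemma mem_c2: "([HMin VX 0 False, HMin VY 0 False, HRelXY 0 1 1], CRel 0) \<in> set (phi f qs ss A)"
  unfolding phi_def set_append by (rule UnI1) simp

lemma mem_c3: "([HMin VX 0 False, HMin VY 0 True], CRel 1) \<in> set (phi f qs ss A)"
  unfolding phi_def set_append by (rule UnI1) simp

lemma mem_c4: "([HMin VY 0 False, HRelXY 1 1 1], CRel 1) \<in> set (phi f qs ss A)"
  unfolding phi_def set_append by (rule UnI1) simp

lemma mem_ini: "s \<in> set ss \<Longrightarrow>
  ([HMin VY 0 True, HQ VX s 0], CRel (rid f (inp A s))) \<in> set (phi f qs ss A)"
  unfolding phi_def set_append
  apply (rule UnI2, rule UnI1)
  by simp

lemma mem_border: "a \<in> set qs \<Longrightarrow> b \<in> set qs \<Longrightarrow>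
  ([HMin VY 0 False, HRelXY 0 0 0, HRelXY (rid f a) 1 1,
            HRelXY (rid f b) 0 1], CRel (rid f (delta A (sharp A) a b))) \<in> set (phi f qs ss A)"
  unfolding phi_def set_append
  apply (rule UnI2, rule UnI2, rule UnI1)
  apply (rule mem2[where F = "\<lambda>a b. ([HMin VY 0 False, HRelXY 0 0 0, HRelXY (rid f a) 1 1,
            HRelXY (rid f b) 0 1], CRel (rid f (delta A (sharp A) a b)))"])
  by assumption+

lemma mem_inner: "a \<in> set qs \<Longrightarrow> b \<in> set qs \<Longrightarrow> c \<in> set qs \<Longrightarrow>
  ([HMin VY 0 False, HRelXY 1 0 0,
            HRelXY (rid f a) 2 1, HRelXY (rid f b) 1 1, HRelXY (rid f c) 0 1],
            CRel (rid f (delta A a b c))) \<in> set (phi f qs ss A)"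
  unfolding phi_def set_append
  apply (rule UnI2, rule UnI2, rule UnI2, rule UnI1)
  apply (rule mem3[where F = "\<lambda>a b c. ([HMin VY 0 False, HRelXY 1 0 0,
            HRelXY (rid f a) 2 1, HRelXY (rid f b) 1 1, HRelXY (rid f c) 0 1],
            CRel (rid f (delta A a b c)))"])
  by assumption+

lemma mem_rej: "q \<in> set qs \<Longrightarrow> q \<notin> accept A \<Longrightarrow>
  ([HMax VX 0 True, HMax VY 0 True, HRelXY (rid f q) 0 0], CBot) \<in> set (phi f qs ss A)"
  unfolding phi_def set_append
  apply (rule UnI2, rule UnI2, rule UnI2, rule UnI2)
  apply (rule mem1[where F = "\<lambda>q. ([HMax VX 0 True, HMax VY 0 True, HRelXY (rid f q) 0 0], CBot)"])
  by assumption+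

lemma phi_cases:
  assumes "cl \<in> set (phi f qs ss A)"
  obtains (c1) "cl = ([HMin VX 0 True, HMin VY 0 True], CRel 0)" | (c2) "cl = ([HMin VX 0 False, HMin VY 0 False, HRelXY 0 1 1], CRel 0)" | (c3) "cl = ([HMin VX 0 False, HMin VY 0 True], CRel 1)" | (c4) "cl = ([HMin VY 0 False, HRelXY 1 1 1], CRel 1)"
    | (ini) s where "cl = ([HMin VY 0 True, HQ VX s 0], CRel (rid f (inp A s)))"
    | (bor) a b where "cl = ([HMin VY 0 False, HRelXY 0 0 0, HRelXY (rid f a) 1 1,
            HRelXY (rid f b) 0 1], CRel (rid f (delta A (sharp A) a b)))"
    | (inn) a b c where "cl = ([HMin VY 0 False, HRelXY 1 0 0,
            HRelXY (rid f a) 2 1, HRelXY (rid f b) 1 1, HRelXY (rid f c) 0 1],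
            CRel (rid f (delta A a b c)))"
    | (rej) q where "q \<notin> accept A" "cl = ([HMax VX 0 True, HMax VY 0 True, HRelXY (rid f q) 0 0], CBot)"
proof -
  from assms have "cl \<in> set [([HMin VX 0 True, HMin VY 0 True], CRel 0), ([HMin VX 0 False, HMin VY 0 False, HRelXY 0 1 1], CRel 0), ([HMin VX 0 False, HMin VY 0 True], CRel 1), ([HMin VY 0 False, HRelXY 1 1 1], CRel 1)]
     \<union> (set (map (\<lambda>s. ([HMin VY 0 True, HQ VX s 0], CRel (rid f (inp A s)))) ss)
     \<union> (set (concat (map (\<lambda>a. map (\<lambda>b. ([HMin VY 0 False, HRelXY 0 0 0, HRelXY (rid f a) 1 1,
            HRelXY (rid f b) 0 1], CRel (rid f (delta A (sharp A) a b)))) qs) qs))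
     \<union> (set (concat (map (\<lambda>a. concat (map (\<lambda>b. map (\<lambda>c. ([HMin VY 0 False, HRelXY 1 0 0,
            HRelXY (rid f a) 2 1, HRelXY (rid f b) 1 1, HRelXY (rid f c) 0 1],
            CRel (rid f (delta A a b c)))) qs) qs)) qs))
     \<union> set (map (\<lambda>q. ([HMax VX 0 True, HMax VY 0 True, HRelXY (rid f q) 0 0], CBot)) (filter (\<lambda>q. q \<notin> accept A) qs)))))"
    unfolding phi_def set_append .
  then show thesis
  proof (elim UnE)
    assume "cl \<in> set [([HMin VX 0 True, HMin VY 0 True], CRel 0), ([HMin VX 0 False, HMin VY 0 False, HRelXY 0 1 1], CRel 0), ([HMin VX 0 False, HMin VY 0 True], CRel 1), ([HMin VY 0 False, HRelXY 1 1 1], CRel 1)]"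
    then have "cl = ([HMin VX 0 True, HMin VY 0 True], CRel 0) \<or> cl = ([HMin VX 0 False, HMin VY 0 False, HRelXY 0 1 1], CRel 0) \<or> cl = ([HMin VX 0 False, HMin VY 0 True], CRel 1) \<or> cl = ([HMin VY 0 False, HRelXY 1 1 1], CRel 1)" by (simp only: set_simps insert_iff empty_iff simp_thms)
    then show thesis using c1 c2 c3 c4 by blast
  next
    assume "cl \<in> set (map (\<lambda>s. ([HMin VY 0 True, HQ VX s 0], CRel (rid f (inp A s)))) ss)"
    then obtain s where "cl = ([HMin VY 0 True, HQ VX s 0], CRel (rid f (inp A s)))" by (auto simp only: set_map image_iff)
    then show thesis by (rule ini)
  next
    assume "cl \<in> set (concat (map (\<lambda>a. map (\<lambda>b. ([HMin VY 0 False, HRelXY 0 0 0, HRelXY (rid f a) 1 1,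
            HRelXY (rid f b) 0 1], CRel (rid f (delta A (sharp A) a b)))) qs) qs))"
    then obtain a b where "cl = ([HMin VY 0 False, HRelXY 0 0 0, HRelXY (rid f a) 1 1,
            HRelXY (rid f b) 0 1], CRel (rid f (delta A (sharp A) a b)))" by (auto simp only: set_concat set_map image_iff UN_iff)
    then show thesis by (rule bor)
  next
    assume "cl \<in> set (concat (map (\<lambda>a. concat (map (\<lambda>b. map (\<lambda>c. ([HMin VY 0 False, HRelXY 1 0 0,
            HRelXY (rid f a) 2 1, HRelXY (rid f b) 1 1, HRelXY (rid f c) 0 1],
            CRel (rid f (delta A a b c)))) qs) qs)) qs))"
    then obtain a b c where "cl = ([HMin VY 0 False, HRelXY 1 0 0,
            HRelXY (rid f a) 2 1, HRelXY (rid f b) 1 1, HRelXY (rid f c) 0 1],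
            CRel (rid f (delta A a b c)))" by (auto simp only: set_concat set_map image_iff UN_iff)
    then show thesis by (rule inn)
  next
    assume "cl \<in> set (map (\<lambda>q. ([HMax VX 0 True, HMax VY 0 True, HRelXY (rid f q) 0 0], CBot)) (filter (\<lambda>q. q \<notin> accept A) qs))"
    then obtain q where "q \<notin> accept A" "cl = ([HMax VX 0 True, HMax VY 0 True, HRelXY (rid f q) 0 0], CBot)" by (auto simp only: set_map image_iff set_filter mem_Collect_eq)
    then show thesis by (rule rej)
  qed
qed

lemma predk_eq: "predk a x = (if a < x then x - a else 1)"
  by (simp add: predk_def max_def; linarith)

definition st :: "('a, 'q) ca \<Rightarrow> 'a list \<Rightarrow> nat \<Rightarrow> nat \<Rightarrow> 'q" where
  "st A w x y = ca_state A w (y - 1) (int x - int y + 1)"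

lemma st_init: "1 \<le> x \<Longrightarrow> x \<le> length w \<Longrightarrow> st A w x 1 = inp A (w ! (x - 1))"
  by (simp add: st_def nat_diff_distrib)

lemma ca_zero[simp]: "ca_state A w t 0 = sharp A"
  by (cases t) auto

lemma st_border: "2 \<le> y \<Longrightarrow> y \<le> length w \<Longrightarrow>
   st A w y y = delta A (sharp A) (st A w (y - 1) (y - 1)) (st A w y (y - 1))"
proof -
  assume a: "2 \<le> y" "y \<le> length w"
  define t where "t = y - 2"
  then have t: "y - 1 = Suc t" "y - 2 = t" using a by auto
  have e1: "int y - int (y - 1) + 1 = 2" using a by simp
  have e2: "int (y - 1) - int (y - 1) + 1 = 1" by simp
  have e3: "int y - int y + 1 = 1" by simp
  have c: "(1::int) \<le> 1" "1 \<le> int (length w)" using a by auto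
  have l: "st A w y y = ca_state A w (Suc t) 1" using t by (simp add: st_def)
  have r: "st A w (y - 1) (y - 1) = ca_state A w t 1"
          "st A w y (y - 1) = ca_state A w t 2"
    using t unfolding st_def e1 e2 e3 by (simp_all add: diff_diff_add)
  have "ca_state A w (Suc t) 1 = delta A (ca_state A w t (1 - 1)) (ca_state A w t 1) (ca_state A w t (1 + 1))"
    using c by (simp only: ca_state.simps if_True simp_thms)
  then show ?thesis unfolding l r by simp
qed

lemma st_inner: "2 \<le> y \<Longrightarrow> y < x \<Longrightarrow> x \<le> length w \<Longrightarrow>
   st A w x y = delta A (st A w (x - 2) (y - 1)) (st A w (x - 1) (y - 1)) (st A w x (y - 1))"
proof -
  assume a: "2 \<le> y" "y < x" "x \<le> length w"
  define t where "t = y - 2"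
  then have t: "y - 1 = Suc t" "y - 2 = t" using a by auto
  have e1: "int (x - 2) - int (y - 1) + 1 = int x - int y + 1 - 1" using a by simp
  have e2: "int (x - 1) - int (y - 1) + 1 = int x - int y + 1" using a by simp
  have e3: "int x - int (y - 1) + 1 = int x - int y + 1 + 1" using a by simp
  define c where "c = int x - int y + 1"
  have c: "1 \<le> c" "c \<le> int (length w)" using a by (auto simp: c_def)
  have l: "st A w x y = ca_state A w (Suc t) c" using t by (simp add: st_def c_def)
  have r: "st A w (x - 2) (y - 1) = ca_state A w t (c - 1)"
          "st A w (x - 1) (y - 1) = ca_state A w t c"
          "st A w x (y - 1) = ca_state A w t (c + 1)"
    using t unfolding st_def e1 e2 e3 c_def by (simp_all add: diff_diff_add)
  show ?thesis unfolding l r using c by (simp only: ca_state.simps if_True simp_thms)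
qed

lemma key:
  fixes A :: "('a, 'q) ca"
  assumes qs: "set qs = UNIV" and ss: "set ss = UNIV" and f: "inj f" and w: "w \<noteq> []"
  shows "rt_accepts A w \<longleftrightarrow> models w (phi f qs ss A)"
proof
  let ?n = "length w"
  assume acc: "rt_accepts A w"
  define I where "I k x y = (if k = 0 then x = y else if k = 1 then y < x
      else y \<le> x \<and> k = rid f (st A w x y))" for k x y
  have R: "I (rid f q) x y \<longleftrightarrow> y \<le> x \<and> q = st A w x y" for q x y
    using f by (auto simp: I_def rid_def inj_eq)
  show "models w (phi f qs ss A)"
    unfolding models_def
  proof (intro exI allI impI ballI)
    fix x y cl
    assume xy: "1 \<le> x \<and> x \<le> ?n \<and> 1 \<le> y \<and> y \<le> ?n"
      and cl: "cl \<in> set (phi f qs ss A)" and hy: "\<forall>h\<in>set (fst cl). hyp_holds w I x y h"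
    from cl show "concl_holds I x y (snd cl)"
    proof (cases rule: phi_cases)
      assume c: "cl = ([HMin VX 0 True, HMin VY 0 True], CRel 0)"
      have p0: "predk 0 x = x" "predk 0 y = y" using xy by (auto simp: predk_eq)
      have "x = 1" "y = 1" using hy c p0 by (simp_all add: vval_def)
      then show ?thesis using c by (simp add: I_def)
    next
      assume c: "cl = ([HMin VX 0 False, HMin VY 0 False, HRelXY 0 1 1], CRel 0)"
      then have "max x 1 \<noteq> 1 \<and> max y 1 \<noteq> 1 \<and> max (x - 1) 1 = max (y - 1) 1" using hy
        by (simp add: predk_def vval_def I_def)
      then have "x = y" using xy by (simp add: max_def split: if_splits; linarith)
      then show ?thesis using c by (simp add: I_def)
    next
      assume "cl = ([HMin VX 0 False, HMin VY 0 True], CRel 1)"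
      then show ?thesis using hy xy by (simp add: predk_def vval_def I_def)
    next
      assume "cl = ([HMin VY 0 False, HRelXY 1 1 1], CRel 1)"
      then show ?thesis using hy xy by (simp add: predk_def vval_def I_def max_def split: if_splits; linarith)
    next
      fix s assume "cl = ([HMin VY 0 True, HQ VX s 0], CRel (rid f (inp A s)))"
      then show ?thesis using hy xy st_init[of x w A] by (simp add: predk_def vval_def R)
    next
      fix a b assume c: "cl = ([HMin VY 0 False, HRelXY 0 0 0, HRelXY (rid f a) 1 1,
            HRelXY (rid f b) 0 1], CRel (rid f (delta A (sharp A) a b)))"
      have p0: "predk 0 x = x" "predk 0 y = y" using xy by (auto simp: predk_eq)
      have h0: "predk 0 y \<noteq> 1" "I 0 x y" "I (rid f a) (predk 1 x) (predk 1 y)"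
        "I (rid f b) x (predk 1 y)"
        using hy c p0 by (simp_all add: vval_def)
      have y1: "y \<noteq> 1" "x = y" using h0 p0 by (simp_all add: I_def)
      then have p1: "predk 1 x = x - 1" "predk 1 y = y - 1" using xy by (auto simp: predk_eq)
      have h: "y \<noteq> 1" "x = y" "a = st A w (x - 1) (y - 1)" "b = st A w x (y - 1)"
        using h0 y1 p1 by (simp_all add: R)
      then show ?thesis using st_border[of y w A] xy c
        by (simp add: R)
    next
      fix a b c assume c: "cl = ([HMin VY 0 False, HRelXY 1 0 0,
            HRelXY (rid f a) 2 1, HRelXY (rid f b) 1 1, HRelXY (rid f c) 0 1],
            CRel (rid f (delta A a b c)))"
      have p0: "predk 0 x = x" "predk 0 y = y" using xy by (auto simp: predk_eq)
      have h0: "predk 0 y \<noteq> 1" "I 1 x y" "I (rid f a) (predk 2 x) (predk 1 y)"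
        "I (rid f b) (predk 1 x) (predk 1 y)" "I (rid f c) x (predk 1 y)"
        using hy c p0 by (simp_all add: vval_def)
      have y1: "y \<noteq> 1" "y < x" using h0 p0 by (simp_all add: I_def)
      then have p1: "predk 2 x = x - 2" "predk 1 x = x - 1" "predk 1 y = y - 1"
        using xy by (auto simp: predk_eq)
      have h: "y \<noteq> 1" "y < x" "a = st A w (x - 2) (y - 1)" "b = st A w (x - 1) (y - 1)"
           "c = st A w x (y - 1)"
        using h0 y1 p1 by (simp_all add: R)
      then show ?thesis using st_inner[of y x w A] xy c
        by (simp add: R)
    next
      fix q assume "q \<notin> accept A" "cl = ([HMax VX 0 True, HMax VY 0 True, HRelXY (rid f q) 0 0], CBot)"
      then show ?thesis using hy xy acc
        by (auto simp: predk_def vval_def R rt_accepts_def st_def)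
    qed
  qed
next
  let ?n = "length w"
  assume "models w (phi f qs ss A)"
  then obtain I where H: "\<And>x y cl. 1 \<le> x \<Longrightarrow> x \<le> ?n \<Longrightarrow> 1 \<le> y \<Longrightarrow> y \<le> ?n \<Longrightarrow>
     cl \<in> set (phi f qs ss A) \<Longrightarrow> (\<forall>h \<in> set (fst cl). hyp_holds w I x y h) \<Longrightarrow> concl_holds I x y (snd cl)"
    unfolding models_def by blast
  have eq: "I 0 x x" if "1 \<le> x" "x \<le> ?n" for x
    using that
  proof (induction x)
    case 0 then show ?case by simp
  next
    case (Suc x)
    show ?case
    proof (cases "x = 0")
      case True
      then show ?thesis using H[OF _ _ _ _ mem_c1, of 1 1] Suc
        by (simp add: predk_eq vval_def)
    next
      case False
      then show ?thesis using H[OF _ _ _ _ mem_c2, of "Suc x" "Suc x"] Suc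
        by (cases "x = 1") (simp_all add: predk_eq vval_def)
    qed
  qed
  have gt: "I 1 x y" if "1 \<le> y" "y < x" "x \<le> ?n" for x y
    using that
  proof (induction y arbitrary: x)
    case 0 then show ?case by simp
  next
    case (Suc y)
    show ?case
    proof (cases "y = 0")
      case True
      then show ?thesis using H[OF _ _ _ _ mem_c3, of x 1] Suc
        by (simp add: predk_eq vval_def)
    next
      case False
      have "I 1 (x - 1) y" using Suc.IH[of "x - 1"] Suc.prems False by simp
      then show ?thesis using H[OF _ _ _ _ mem_c4, of x "Suc y"] Suc False
        by (simp add: predk_eq vval_def)
    qed
  qed
  have stI: "I (rid f (st A w x y)) x y" if "1 \<le> y" "y \<le> x" "x \<le> ?n" for x y
    using that
  proof (induction y arbitrary: x)
    case 0 then show ?case by simp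
  next
    case (Suc y)
    show ?case
    proof (cases "y = 0")
      case True
      have "w ! (x - 1) \<in> set ss" using ss by simp
      then show ?thesis using H[OF _ _ _ _ mem_ini, of x 1 "w ! (x - 1)"]
          Suc True st_init[of x w A]
        by (simp add: predk_eq vval_def)
    next
      case False
      show ?thesis
      proof (cases "x = Suc y")
        case True
        let ?a = "st A w (x - 1) y" and ?b = "st A w x y"
        have ia: "I (rid f ?a) (x - 1) y" using Suc.IH[of "x - 1"] Suc.prems False True by simp
        have ib: "I (rid f ?b) x y" using Suc.IH[of x] Suc.prems False True by simp
        have e: "I 0 x (Suc y)" using eq[of x] True Suc.prems by simp
        have m: "([HMin VY 0 False, HRelXY 0 0 0, HRelXY (rid f ?a) 1 1,
            HRelXY (rid f ?b) 0 1], CRel (rid f (delta A (sharp A) ?a ?b))) \<in> set (phi f qs ss A)"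
          using qs by (intro mem_border) auto
        have "I (rid f (delta A (sharp A) ?a ?b)) x (Suc y)"
          using H[OF _ _ _ _ m] Suc.prems False True ia ib e
          by (simp add: predk_eq vval_def)
        then show ?thesis using st_border[of "Suc y" w A] Suc.prems False True by simp
      next
        case ne: False
        let ?a = "st A w (x - 2) y" and ?b = "st A w (x - 1) y" and ?c = "st A w x y"
        have ia: "I (rid f ?a) (x - 2) y" using Suc.IH[of "x - 2"] Suc.prems False ne by simp
        have ib: "I (rid f ?b) (x - 1) y" using Suc.IH[of "x - 1"] Suc.prems False ne by simp
        have ic: "I (rid f ?c) x y" using Suc.IH[of x] Suc.prems False ne by simp
        have g: "I 1 x (Suc y)" using gt[of "Suc y" x] ne Suc.prems by simp
        have m: "([HMin VY 0 False, HRelXY 1 0 0,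
            HRelXY (rid f ?a) 2 1, HRelXY (rid f ?b) 1 1, HRelXY (rid f ?c) 0 1],
            CRel (rid f (delta A ?a ?b ?c))) \<in> set (phi f qs ss A)"
          using qs by (intro mem_inner) auto
        have "I (rid f (delta A ?a ?b ?c)) x (Suc y)"
          using H[OF _ _ _ _ m] Suc.prems False ne ia ib ic g
          by (simp add: predk_eq vval_def)
        then show ?thesis using st_inner[of "Suc y" x w A] Suc.prems False ne by simp
      qed
    qed
  qed
  show "rt_accepts A w"
  proof (rule ccontr)
    let ?q = "st A w ?n ?n"
    assume na: "\<not> rt_accepts A w"
    have "?q \<notin> accept A" using na by (simp add: rt_accepts_def st_def)
    then have m: "([HMax VX 0 True, HMax VY 0 True, HRelXY (rid f ?q) 0 0], CBot) \<in> set (phi f qs ss A)"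
      using qs by (intro mem_rej) auto
    have "1 \<le> ?n" using w by (cases w) auto
    then show False using H[OF _ _ _ _ m] stI[of ?n ?n]
      by (simp add: predk_eq vval_def)
  qed
qed

theorem lemma3:
  fixes A :: "('a::finite, 'q::finite) ca"
  assumes "ca_wf A"
  shows "\<exists>\<Phi> :: 'a horn_formula. \<forall>w :: 'a list. w \<noteq> [] \<longrightarrow> (rt_accepts A w \<longleftrightarrow> models w \<Phi>)"
proof -
  obtain qs :: "'q list" where qs: "set qs = UNIV" using finite_list[of "UNIV :: 'q set"] by auto
  obtain ss :: "'a list" where ss: "set ss = UNIV" using finite_list[of "UNIV :: 'a set"] by auto
  obtain f :: "'q \<Rightarrow> nat" where f: "inj f"
    using finite_imp_inj_to_nat_seg[of "UNIV :: 'q set"] by auto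
  show ?thesis using key[OF qs ss f] by blast
qed

end
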